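(* For every $0<\delta<1$ there is a constant $K(\delta)<\infty$ depending only on $\delta$ such that the following holds. Let $1<R<2$ and let $\mu$ be measurable with $\operatorname{supp}\mu\subset A(1/2,1/R)$ and $\|\mu\|_\infty\leqslant1$. Then \[ \frac{1}{2\pi}\int_{|z|=1}|\mathcal{S}\mu(z)|^2\,|dz|\leqslant(1+\delta)\log\frac{1}{R-1}+K(\delta). \]
   Context: $A(\rho,R)=\{\rho<|z|<R\}$. The Beurling transform is $\mathcal{S}\mu(z)=-\frac{1}{\pi}\,\mathrm{p.v.}\int_{\mathbb{C}}\frac{\mu(w)}{(z-w)^2}\,dm(w)$. *)

theory Defs
  imports "HOL-Analysis.Analysis"
begin

definition annulus :: "real \<Rightarrow> real \<Rightarrow> complex set" where
  "annulus \<rho> R = {z. \<rho> < cmod z \<and> cmod z < R}"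

definition beurling :: "(complex \<Rightarrow> complex) \<Rightarrow> complex \<Rightarrow> complex" where
  "beurling \<mu> z = Lim (at_right (0::real))
     (\<lambda>\<epsilon>. - (1 / of_real pi) *
        (LINT w : {w. \<epsilon> < dist z w} | lebesgue. \<mu> w / (z - w)\<^sup>2))"

end

theory Submission
  imports Defs
begin


lemma lborel_complex_eq:
  "distr (lborel :: (real \<times> real) measure) borel (\<lambda>p. Complex (fst p) (snd p)) = (lborel :: complex measure)"
proof (rule lborel_eqI[symmetric])
  have mP: "(\<lambda>p::real\<times>real. Complex (fst p) (snd p)) \<in> borel_measurable borel"
    by (rule borel_measurable_continuous_onI) (simp add: Complex_eq continuous_intros)
  fix l u :: complex
  assume le: "\<And>b. b \<in> Basis \<Longrightarrow> l \<bullet> b \<le> u \<bullet> b"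
  have le1: "Re l \<le> Re u" and le2: "Im l \<le> Im u"
    using le[of 1] le[of \<i>] by (auto simp: Basis_complex_def)
  have pre: "(\<lambda>p. Complex (fst p) (snd p)) -` box l u = {Re l<..<Re u} \<times> {Im l<..<Im u}"
    by (auto simp: in_box_complex_iff)
  have "emeasure (distr (lborel :: (real \<times> real) measure) borel (\<lambda>p. Complex (fst p) (snd p))) (box l u)
      = emeasure (lborel :: (real \<times> real) measure) ({Re l<..<Re u} \<times> {Im l<..<Im u})"
    using mP by (subst emeasure_distr) (auto simp: pre)
  also have "\<dots> = emeasure (lborel \<Otimes>\<^sub>M lborel) ({Re l<..<Re u} \<times> {Im l<..<Im u})"
    by (simp add: lborel_prod)
  also have "\<dots> = ennreal ((Re u - Re l) * (Im u - Im l))"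
    using le1 le2 by (simp add: lborel.emeasure_pair_measure_Times ennreal_mult)
  also have "(Re u - Re l) * (Im u - Im l) = (\<Prod>b\<in>Basis. (u - l) \<bullet> b)"
    by (simp add: Basis_complex_def inner_complex_def)
  finally show "emeasure (distr (lborel :: (real \<times> real) measure) borel (\<lambda>p. Complex (fst p) (snd p))) (box l u) = (\<Prod>b\<in>Basis. (u - l) \<bullet> b)" .
qed simp

lemma shear1_inv:
  "distr (lborel :: (real \<times> real) measure) borel (\<lambda>p. (fst p + a * snd p, snd p)) = lborel"
proof (rule measure_eqI)
  fix A :: "(real \<times> real) set" assume A: "A \<in> sets (distr lborel borel (\<lambda>p. (fst p + a * snd p, snd p)))"
  then have Ab: "A \<in> sets borel" by simp
  let ?f = "\<lambda>p::real\<times>real. (fst p + a * snd p, snd p)"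
  have mf: "?f \<in> borel_measurable borel"
    by (rule borel_measurable_continuous_onI) (intro continuous_intros)
  have A2: "A \<in> sets (lborel \<Otimes>\<^sub>M lborel)" using Ab by (simp only: lborel_prod sets_lborel)
  have B: "?f -` A \<in> sets (lborel \<Otimes>\<^sub>M lborel)"
    using measurable_sets_borel[OF mf Ab] A2 by (metis borel_prod lborel_prod sets_lborel)
  have "emeasure (distr lborel borel ?f) A = emeasure (lborel \<Otimes>\<^sub>M lborel) (?f -` A)"
    using Ab mf by (subst emeasure_distr) (auto simp: lborel_prod)
  also have "\<dots> = \<integral>\<^sup>+ y. emeasure lborel ((\<lambda>x. (x, y)) -` (?f -` A)) \<partial>lborel"
    by (rule lborel_pair.emeasure_pair_measure_alt2[OF B])
  also have "\<dots> = \<integral>\<^sup>+ y. emeasure lborel ((\<lambda>x. (x, y)) -` A) \<partial>lborel"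
  proof (rule nn_integral_cong)
    fix y :: real
    have s: "(\<lambda>x. (x, y)) -` A \<in> sets borel"
    proof -
      have mxy: "(\<lambda>x::real. (x,y)) \<in> borel_measurable borel"
        by (rule borel_measurable_continuous_onI) (intro continuous_intros)
      show ?thesis using measurable_sets_borel[OF mxy Ab] by simp
    qed
    have "(\<lambda>x. (x, y)) -` (?f -` A) = (\<lambda>x. x + a * y) -` ((\<lambda>x. (x, y)) -` A)" by auto
    also have "emeasure lborel \<dots> = emeasure (distr lborel borel (\<lambda>x. a * y + x)) ((\<lambda>x. (x, y)) -` A)"
      using s by (subst emeasure_distr) (auto simp: add.commute vimage_def)
    also have "\<dots> = emeasure lborel ((\<lambda>x. (x, y)) -` A)" by (simp add: lborel_distr_plus)
    finally show "emeasure lborel ((\<lambda>x. (x, y)) -` (?f -` A)) = emeasure lborel ((\<lambda>x. (x, y)) -` A)" .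
  qed
  also have "\<dots> = emeasure (lborel \<Otimes>\<^sub>M lborel) A"
    by (rule lborel_pair.emeasure_pair_measure_alt2[OF A2, symmetric])
  finally show "emeasure (distr lborel borel ?f) A = emeasure lborel A" by (simp add: lborel_prod)
qed simp

lemma shear2_inv:
  "distr (lborel :: (real \<times> real) measure) borel (\<lambda>p. (fst p, snd p + b * fst p)) = lborel"
proof (rule measure_eqI)
  fix A :: "(real \<times> real) set" assume A: "A \<in> sets (distr lborel borel (\<lambda>p. (fst p, snd p + b * fst p)))"
  then have Ab: "A \<in> sets borel" by simp
  let ?f = "\<lambda>p::real\<times>real. (fst p, snd p + b * fst p)"
  have mf: "?f \<in> borel_measurable borel"
    by (rule borel_measurable_continuous_onI) (intro continuous_intros)
  have A2: "A \<in> sets (lborel \<Otimes>\<^sub>M lborel)" using Ab by (simp only: lborel_prod sets_lborel)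
  have B: "?f -` A \<in> sets (lborel \<Otimes>\<^sub>M lborel)"
    using measurable_sets_borel[OF mf Ab] A2 by (metis borel_prod lborel_prod sets_lborel)
  have "emeasure (distr lborel borel ?f) A = emeasure (lborel \<Otimes>\<^sub>M lborel) (?f -` A)"
    using Ab mf by (subst emeasure_distr) (auto simp: lborel_prod)
  also have "\<dots> = \<integral>\<^sup>+ x. emeasure lborel (Pair x -` (?f -` A)) \<partial>lborel"
    by (rule lborel.emeasure_pair_measure_alt[OF B])
  also have "\<dots> = \<integral>\<^sup>+ x. emeasure lborel (Pair x -` A) \<partial>lborel"
  proof (rule nn_integral_cong)
    fix x :: real
    have s: "Pair x -` A \<in> sets borel"
    proof -
      have mxy: "(\<lambda>y::real. (x,y)) \<in> borel_measurable borel"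
        by (rule borel_measurable_continuous_onI) (intro continuous_intros)
      show ?thesis using measurable_sets_borel[OF mxy Ab] by (simp add: vimage_def)
    qed
    have "Pair x -` (?f -` A) = (\<lambda>y. y + b * x) -` (Pair x -` A)" by auto
    also have "emeasure lborel \<dots> = emeasure (distr lborel borel (\<lambda>y. b * x + y)) (Pair x -` A)"
      using s by (subst emeasure_distr) (auto simp: add.commute vimage_def)
    also have "\<dots> = emeasure lborel (Pair x -` A)" by (simp add: lborel_distr_plus)
    finally show "emeasure lborel (Pair x -` (?f -` A)) = emeasure lborel (Pair x -` A)" .
  qed
  also have "\<dots> = emeasure (lborel \<Otimes>\<^sub>M lborel) A"
    by (rule lborel.emeasure_pair_measure_alt[OF A2, symmetric])
  finally show "emeasure (distr lborel borel ?f) A = emeasure lborel A" by (simp add: lborel_prod)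
qed simp

lemma rotation_inv:
  fixes z :: complex
  assumes nz: "cmod z = 1" and nm1: "z \<noteq> -1"
  shows "distr (lborel :: complex measure) borel (\<lambda>w. z * w) = lborel"
proof -
  define c where "c = Re z"
  define s where "s = Im z"
  have cs: "c^2 + s^2 = 1" using nz unfolding c_def s_def cmod_def by simp
  have c1: "1 + c \<noteq> 0"
  proof
    assume "1 + c = 0" then have "c = -1" by simp
    with cs have "s = 0" by simp
    with \<open>c = -1\<close> nm1 show False unfolding c_def s_def by (simp add: complex_eq_iff)
  qed
  define \<alpha> where "\<alpha> = - s / (1 + c)"
  let ?P = "\<lambda>p::real\<times>real. Complex (fst p) (snd p)"
  let ?X = "\<lambda>p::real\<times>real. (fst p + \<alpha> * snd p, snd p)"
  let ?Y = "\<lambda>p::real\<times>real. (fst p, snd p + s * fst p)"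
  have mP: "?P \<in> borel_measurable borel"
    by (rule borel_measurable_continuous_onI) (simp add: Complex_eq continuous_intros)
  have mX: "?X \<in> borel_measurable borel"
    by (rule borel_measurable_continuous_onI) (intro continuous_intros)
  have mY: "?Y \<in> borel_measurable borel"
    by (rule borel_measurable_continuous_onI) (intro continuous_intros)
  have mz: "(\<lambda>w. z * w) \<in> borel_measurable (borel :: complex measure)"
    by (rule borel_measurable_continuous_onI) (intro continuous_intros)
  have ab: "\<alpha> * s = c - 1"
  proof -
    have "\<alpha> * s = - (s^2) / (1 + c)" by (simp add: \<alpha>_def power2_eq_square)
    also have "s^2 = (1 - c) * (1 + c)" using cs by (simp add: algebra_simps power2_eq_square)
    finally show ?thesis using c1 by simp
  qed
  have a2: "\<alpha> * (1 + c) = - s" using c1 by (simp add: \<alpha>_def)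
  have comp: "(\<lambda>w. z * w) \<circ> ?P = ?P \<circ> ?X \<circ> ?Y \<circ> ?X"
  proof (rule ext)
    fix p :: "real \<times> real"
    obtain x y where p: "p = (x, y)" by (cases p)
    have "z = Complex c s" unfolding c_def s_def by simp
    then have l: "((\<lambda>w. z * w) \<circ> ?P) p = Complex (c * x - s * y) (s * x + c * y)"
      by (simp add: p complex_eq_iff)
    have r: "(?P \<circ> ?X \<circ> ?Y \<circ> ?X) p =
        Complex ((1 + \<alpha> * s) * x + (\<alpha> * (2 + \<alpha> * s)) * y) (s * x + (1 + \<alpha> * s) * y)"
      by (simp add: p algebra_simps)
    have e1: "1 + \<alpha> * s = c" using ab by simp
    have h2: "2 + \<alpha> * s = 1 + c" using ab by simp
    have e2: "\<alpha> * (2 + \<alpha> * s) = - s" unfolding h2 by (rule a2)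
    show "((\<lambda>w. z * w) \<circ> ?P) p = (?P \<circ> ?X \<circ> ?Y \<circ> ?X) p"
      unfolding l r e1 e2 by simp
  qed
  have "distr (lborel :: complex measure) borel (\<lambda>w. z * w) = distr (distr lborel borel ?P) borel (\<lambda>w. z * w)"
    by (simp add: lborel_complex_eq)
  also have "\<dots> = distr lborel borel ((\<lambda>w. z * w) \<circ> ?P)"
    by (rule distr_distr) (use mz mP in auto)
  also have "\<dots> = distr lborel borel (?P \<circ> ?X \<circ> ?Y \<circ> ?X)" by (simp only: comp)
  also have "\<dots> = distr (distr (distr (distr lborel borel ?X) borel ?Y) borel ?X) borel ?P"
    using mP mX mY by (simp add: distr_distr comp_assoc)
  also have "\<dots> = lborel"
    by (simp only: shear1_inv shear2_inv lborel_complex_eq)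
  finally show ?thesis .
qed



lemma ubv2: "unit_ball_vol 2 = pi" using unit_ball_vol_even[of 1] by simp

lemma emeasure_ball_complex: "0 \<le> r \<Longrightarrow> emeasure lborel (ball (0::complex) r) = ennreal (pi * r^2)"
  by (simp add: emeasure_ball ubv2)

lemma emeasure_cball_complex: "0 \<le> r \<Longrightarrow> emeasure lborel (cball (0::complex) r) = ennreal (pi * r^2)"
  by (simp add: emeasure_cball ubv2)

lemma has_integral_2pis:
  assumes "0 \<le> a" "a \<le> 1"
  shows "((\<lambda>s. 2 * pi *  s) has_integral (pi - pi * a^2)) {a<..<1}"
proof -
  have "((\<lambda>s. 2 * pi *  s) has_integral (pi * 1^2 - pi * a^2)) {a..1}"
    by (rule fundamental_theorem_of_calculus[OF assms(2)])
       (auto intro!: derivative_eq_intros simp: has_real_derivative_iff_has_vector_derivative[symmetric])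
  then show ?thesis by (simp add: has_integral_Icc_iff_Ioo)
qed

lemma radial_measure:
  "distr (density lborel (indicator (ball (0::complex) 1))) borel cmod
     = density lborel (\<lambda>s. ennreal (2 * pi *  s) * indicator {0<..<1} s)"
proof (rule measure_eqI_lessThan)
  show "sets (distr (density lborel (indicator (ball (0::complex) 1))) borel cmod) = sets borel" by simp
  show "sets (density lborel (\<lambda>s. ennreal (2 * pi *  s) * indicator {0<..<1} s)) = sets borel" by simp
  have mc: "cmod \<in> borel_measurable (borel :: complex measure)" by simp
  have L: "emeasure (distr (density lborel (indicator (ball (0::complex) 1))) borel cmod) {x<..}
      = emeasure lborel (ball 0 1 \<inter> {w::complex. x < cmod w})" for x
  proof -
    have o: "{w::complex. x < cmod w} \<in> sets borel"
      by (rule borel_open) (simp add: open_Collect_less continuous_on_const continuous_on_norm_id)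
    have "emeasure (distr (density lborel (indicator (ball (0::complex) 1))) borel cmod) {x<..}
        = emeasure (density lborel (indicator (ball (0::complex) 1))) (cmod -` {x<..})"
      by (subst emeasure_distr) auto
    also have "cmod -` {x<..} = {w::complex. x < cmod w}" by auto
    also have "emeasure (density lborel (indicator (ball (0::complex) 1))) {w::complex. x < cmod w}
        = emeasure lborel (ball 0 1 \<inter> {w::complex. x < cmod w})"
      using o by (subst emeasure_restricted) auto
    finally show ?thesis .
  qed
  define V where "V x = (if x < 0 then pi else if x < 1 then pi - pi * x^2 else 0)" for x :: real
  have LV: "emeasure lborel (ball 0 1 \<inter> {w::complex. x < cmod w}) = ennreal (V x)" for x
  proof (cases "x < 0")
    case True
    then have "ball 0 1 \<inter> {w::complex. x < cmod w} = ball 0 1"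
      using norm_ge_zero by (auto intro: less_le_trans)
    then show ?thesis using True by (simp add: V_def emeasure_ball_complex)
  next
    case False
    show ?thesis
    proof (cases "x < 1")
      case True
      have eq: "ball 0 1 \<inter> {w::complex. x < cmod w} = ball 0 1 - cball 0 x"
        by (auto simp: dist_norm)
      have "emeasure lborel (ball (0::complex) 1 - cball 0 x) = emeasure lborel (ball (0::complex) 1) - emeasure lborel (cball (0::complex) x)"
        using True False by (intro emeasure_Diff) (auto simp: emeasure_cball_complex)
      also have "\<dots> = ennreal (pi - pi * x^2)"
        using True False by (simp add: emeasure_ball_complex emeasure_cball_complex ennreal_minus power_le_one)
      finally show ?thesis using True False eq by (simp add: V_def)
    next
      case False2: False
      then have "ball 0 1 \<inter> {w::complex. x < cmod w} = {}" by auto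
      then show ?thesis using False2 False by (simp add: V_def)
    qed
  qed
  have RV: "emeasure (density lborel (\<lambda>s. ennreal (2 * pi *  s) * indicator {0<..<1} s)) {x<..} = ennreal (V x)" for x
  proof -
    have "emeasure (density lborel (\<lambda>s. ennreal (2 * pi *  s) * indicator {0<..<1} s)) {x<..}
       = \<integral>\<^sup>+ s. ennreal (2 * pi *  s) * indicator {0<..<1} s * indicator {x<..} s \<partial>lborel"
      by (subst emeasure_density) auto
    also have "\<dots> = V x"
    proof (cases "x < 1")
      case True
      define a where "a = max x 0"
      have a: "0 \<le> a" "a \<le> 1" using True by (auto simp: a_def)
      have "(\<integral>\<^sup>+ s. ennreal (2 * pi *  s) * indicator {0<..<1} s * indicator {x<..} s \<partial>lborel)
          = (\<integral>\<^sup>+ s. ennreal (indicator {a<..<1} s * (2 * pi *  s)) \<partial>lborel)"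
        by (rule nn_integral_cong) (auto simp: a_def split: split_indicator)
      also have "\<dots> = ennreal (pi - pi * a^2)"
        by (rule nn_integral_has_integral_lebesgue[OF _ has_integral_2pis[OF a]]) (use a in auto)
      also have "pi - pi * a^2 = V x" using True by (auto simp: a_def V_def max_def)
      finally show ?thesis .
    next
      case False
      have "(\<integral>\<^sup>+ s. ennreal (2 * pi *  s) * indicator {0<..<1} s * indicator {x<..} s \<partial>lborel) = (\<integral>\<^sup>+ s. 0 \<partial>(lborel::real measure))"
        by (rule nn_integral_cong) (use False in \<open>auto split: split_indicator\<close>)
      then show ?thesis using False by (simp add: V_def)
    qed
    finally show ?thesis .
  qed
  show "emeasure (distr (density lborel (indicator (ball (0::complex) 1))) borel cmod) {x<..} < \<infinity>" for x
    unfolding L LV by simp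
  show "emeasure (distr (density lborel (indicator (ball (0::complex) 1))) borel cmod) {x<..} =
        emeasure (density lborel (\<lambda>s. ennreal (2 * pi *  s) * indicator {0<..<1} s)) {x<..}" for x
    unfolding L LV RV ..
qed



lemma bm_cnjpow: "(\<lambda>x::complex. cnj x ^ j * x ^ k) \<in> borel_measurable borel"
  by (rule borel_measurable_continuous_onI) (intro continuous_intros)

lemma integral_rot:
  fixes f :: "complex \<Rightarrow> complex"
  assumes "cmod z = 1" "z \<noteq> -1" and f: "f \<in> borel_measurable borel"
  shows "integral\<^sup>L lborel (\<lambda>w. f (z * w)) = integral\<^sup>L lborel f"
proof -
  have mz: "(\<lambda>w. z * w) \<in> borel_measurable (borel :: complex measure)"
    by (rule borel_measurable_continuous_onI) (intro continuous_intros)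
  have "integral\<^sup>L lborel f = integral\<^sup>L (distr lborel borel (\<lambda>w. z * w)) f"
    by (simp add: rotation_inv[OF assms(1,2)])
  also have "\<dots> = integral\<^sup>L lborel (\<lambda>w. f (z * w))"
    by (rule integral_distr) (use mz f in auto)
  finally show ?thesis ..
qed

lemma orth_rot:
  fixes h :: "real \<Rightarrow> real"
  assumes h: "h \<in> borel_measurable borel" and jk: "j \<noteq> k"
  shows "integral\<^sup>L lborel (\<lambda>w. complex_of_real (h (cmod w)) * cnj w ^ j * w ^ k) = 0"
proof -
  define d :: real where "d = real k - real j"
  have d0: "d \<noteq> 0" using jk by (simp add: d_def)
  define \<theta> where "\<theta> = pi / (2 * d)"
  define z where "z = cis \<theta>"
  have dt: "d * \<theta> = pi / 2" using d0 by (simp add: \<theta>_def)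
  have nz: "cmod z = 1" by (simp add: z_def)
  have "\<bar>d\<bar> \<ge> 1"
  proof -
    have "d = of_int (int k - int j)" by (simp add: d_def)
    moreover have "int k - int j \<noteq> 0" using jk by simp
    ultimately show ?thesis by (metis of_int_1_le_iff of_int_abs zero_less_abs_iff int_one_le_iff_zero_less)
  qed
  then have "\<bar>\<theta>\<bar> \<le> pi / 2"
  proof -
    have "\<bar>\<theta>\<bar> = pi / (2 * \<bar>d\<bar>)" by (simp add: \<theta>_def abs_divide abs_mult)
    also have "\<dots> \<le> pi / 2" using \<open>\<bar>d\<bar> \<ge> 1\<close>
      by (intro divide_left_mono) (auto simp: pi_gt_zero order.strict_implies_order)
    finally show ?thesis .
  qed
  then have "cos \<theta> \<ge> 0" by (intro cos_ge_zero) auto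
  then have zm1: "z \<noteq> -1" by (auto simp: z_def complex_eq_iff)
  define F where "F w = complex_of_real (h (cmod w)) * cnj w ^ j * w ^ k" for w
  have mF: "F \<in> borel_measurable borel"
  proof -
    have 1: "(\<lambda>w. complex_of_real (h (cmod w))) \<in> borel_measurable borel" using h by measurable
    have "(\<lambda>w. complex_of_real (h (cmod w)) * (cnj w ^ j * w ^ k)) \<in> borel_measurable borel"
      by (rule borel_measurable_times[OF 1 bm_cnjpow])
    then show ?thesis unfolding F_def by (simp add: mult.assoc)
  qed
  have fac: "cnj z ^ j * z ^ k = \<i>"
  proof -
    have "cnj z ^ j * z ^ k = cis (real j * (-\<theta>)) * cis (real k * \<theta>)"
      unfolding z_def cis_cnj by (simp only: Complex.DeMoivre)
    also have "\<dots> = cis (real j * (-\<theta>) + real k * \<theta>)" by (rule cis_mult)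
    also have "real j * (-\<theta>) + real k * \<theta> = pi / 2" using dt by (simp add: d_def algebra_simps)
    finally show ?thesis by simp
  qed
  have Fz: "F (z * w) = \<i> * F w" for w
  proof -
    have "F (z * w) = complex_of_real (h (cmod w)) * (cnj z ^ j * z ^ k) * (cnj w ^ j * w ^ k)"
      unfolding F_def by (simp only: norm_mult nz mult_1 complex_cnj_mult power_mult_distrib) (simp only: ac_simps)
    also have "\<dots> = complex_of_real (h (cmod w)) * \<i> * (cnj w ^ j * w ^ k)" by (simp only: fac)
    also have "\<dots> = \<i> * F w" by (simp add: F_def mult_ac)
    finally show ?thesis .
  qed
  have "integral\<^sup>L lborel F = integral\<^sup>L lborel (\<lambda>w. F (z * w))"
    by (rule integral_rot[OF nz zm1 mF, symmetric])
  also have "\<dots> = \<i> * integral\<^sup>L lborel F" by (simp add: Fz)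
  finally have "(1 - \<i>) * integral\<^sup>L lborel F = 0" by (simp add: algebra_simps)
  then have "integral\<^sup>L lborel F = 0" by simp
  then show ?thesis unfolding F_def by simp
qed



lemma radial_nn:
  fixes g :: "real \<Rightarrow> ennreal"
  assumes g: "g \<in> borel_measurable borel"
  shows "(\<integral>\<^sup>+ w. indicator (ball (0::complex) 1) w * g (cmod w) \<partial>lborel)
       = (\<integral>\<^sup>+ s. ennreal (2 * pi * s) * indicator {0<..<1} s * g s \<partial>lborel)"
proof -
  have mind: "indicator (ball (0::complex) 1) \<in> borel_measurable borel"
    by (rule borel_measurable_indicator) simp
  have "(\<integral>\<^sup>+ s. ennreal (2 * pi * s) * indicator {0<..<1} s * g s \<partial>lborel)
      = (\<integral>\<^sup>+ s. g s \<partial>(density lborel (\<lambda>s. ennreal (2 * pi * s) * indicator {0<..<1} s)))"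
    using g by (subst nn_integral_density) auto
  also have "\<dots> = (\<integral>\<^sup>+ s. g s \<partial>(distr (density lborel (indicator (ball (0::complex) 1))) borel cmod))"
    by (simp add: radial_measure)
  also have "\<dots> = (\<integral>\<^sup>+ w. g (cmod w) \<partial>(density lborel (indicator (ball (0::complex) 1))))"
    using g by (subst nn_integral_distr) auto
  also have "\<dots> = (\<integral>\<^sup>+ w. indicator (ball (0::complex) 1) w * g (cmod w) \<partial>lborel)"
    using g mind by (subst nn_integral_density) auto
  finally show ?thesis ..
qed

lemma has_integral_diag:
  "((\<lambda>s. 2 * pi * s * (1 - s^2) * (s^2)^k) has_integral (pi / ((real k + 1) * (real k + 2)))) {0<..<1}"
proof -
  define F where "F s = pi * s^(2*k+2) / (real k + 1) - pi * s^(2*k+4) / (real k + 2)" for s :: real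
  have d: "(F has_real_derivative 2 * pi * s * (1 - s^2) * (s^2)^k) (at s)" for s
  proof -
    have 1: "((\<lambda>s. s^(2*k+2)) has_real_derivative real (2*k+2) * s^(2*k+1)) (at s)"
      using DERIV_pow[of "2*k+2" s] by simp
    have 2: "((\<lambda>s. s^(2*k+4)) has_real_derivative real (2*k+4) * s^(2*k+3)) (at s)"
      using DERIV_pow[of "2*k+4" s] by (simp add: numeral_eq_Suc)
    have "(F has_real_derivative pi * (real (2*k+2) * s^(2*k+1)) / (real k + 1)
         - pi * (real (2*k+4) * s^(2*k+3)) / (real k + 2)) (at s)"
      unfolding F_def by (intro DERIV_diff DERIV_cdivide DERIV_cmult 1 2)
    moreover have "pi * (real (2*k+2) * s^(2*k+1)) / (real k + 1)
         - pi * (real (2*k+4) * s^(2*k+3)) / (real k + 2)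
        = 2 * pi * s * (1 - s^2) * (s^2)^k"
    proof -
      have a: "real (2*k+2) = 2 * (real k + 1)" and b: "real (2*k+4) = 2 * (real k + 2)" by simp_all
      have p1: "s^(2*k+1) = s * (s^2)^k" by (simp add: power_mult[symmetric] power_add mult.commute)
      have e3: "2*k+3 = (2*k+1)+2" by simp
      have p2': "s^(2*k+3) = s^(2*k+1) * s^2" unfolding e3 by (rule power_add)
      have p2: "s^(2*k+3) = s * s^2 * (s^2)^k" unfolding p2' p1 by (simp add: mult_ac)
      have "pi * (real (2*k+2) * s^(2*k+1)) / (real k + 1) = 2 * pi * s * (s^2)^k"
        unfolding a p1 by (simp add: field_simps)
      moreover have "pi * (real (2*k+4) * s^(2*k+3)) / (real k + 2) = 2 * pi * s * s^2 * (s^2)^k"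
        unfolding b p2 by (simp add: field_simps)
      ultimately show ?thesis by (simp add: algebra_simps)
    qed
    ultimately show ?thesis by simp
  qed
  have "((\<lambda>s. 2 * pi * s * (1 - s^2) * (s^2)^k) has_integral (F 1 - F 0)) {0..1}"
    by (rule fundamental_theorem_of_calculus)
       (auto intro: has_field_derivative_at_within[OF d] simp: has_real_derivative_iff_has_vector_derivative[symmetric])
  moreover have "F 1 - F 0 = pi / ((real k + 1) * (real k + 2))"
    by (simp add: F_def field_simps)
  ultimately show ?thesis by (simp add: has_integral_Icc_iff_Ioo)
qed

lemma has_integral_log:
  assumes r: "0 \<le> r" "r < 1"
  shows "((\<lambda>s. 2 * pi * s / (1 - s^2)) has_integral (- pi * ln (1 - r^2))) {0<..<r}"
proof -
  define F where "F s = - pi * ln (1 - s^2)" for s :: real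
  have d: "(F has_real_derivative 2 * pi * s / (1 - s^2)) (at s)" if "\<bar>s\<bar> < 1" for s
  proof -
    have "s^2 < 1" using that by (simp add: abs_square_less_1)
    then have "(F has_real_derivative - pi * ((- (2 * s)) / (1 - s^2))) (at s)"
      unfolding F_def by (auto intro!: derivative_eq_intros simp: power2_eq_square)
    then show ?thesis by (rule DERIV_cong) (simp add: algebra_simps)
  qed
  have "((\<lambda>s. 2 * pi * s / (1 - s^2)) has_integral (F r - F 0)) {0..r}"
    by (rule fundamental_theorem_of_calculus)
       (use r in \<open>auto intro!: has_field_derivative_at_within[OF d] simp: has_real_derivative_iff_has_vector_derivative[symmetric]\<close>)
  moreover have "F r - F 0 = - pi * ln (1 - r^2)" by (simp add: F_def)
  ultimately show ?thesis by (simp add: has_integral_Icc_iff_Ioo)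
qed



lemma bm_ind_ball [measurable]: "(indicator (ball (0::complex) r) :: complex \<Rightarrow> real) \<in> borel_measurable borel"
  by (rule borel_measurable_indicator) simp

lemma bm_ind_ball_times: "(g :: complex \<Rightarrow> real) \<in> borel_measurable borel \<Longrightarrow> (\<lambda>w. indicator (ball (0::complex) r) w * g w) \<in> borel_measurable borel"
  by (rule borel_measurable_times[OF bm_ind_ball])

lemma radial_real:
  fixes g :: "real \<Rightarrow> real"
  assumes g: "g \<in> borel_measurable borel" and nn: "\<And>s. 0 \<le> s \<Longrightarrow> s < 1 \<Longrightarrow> 0 \<le> g s"
  shows "(\<integral>\<^sup>+ w. ennreal (indicator (ball (0::complex) 1) w * g (cmod w)) \<partial>lborel)
       = (\<integral>\<^sup>+ s. ennreal (indicator {0<..<1} s * (2 * pi * s * g s)) \<partial>lborel)"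
proof -
  have "(\<integral>\<^sup>+ w. ennreal (indicator (ball (0::complex) 1) w * g (cmod w)) \<partial>lborel)
      = (\<integral>\<^sup>+ w. indicator (ball (0::complex) 1) w * ennreal (g (cmod w)) \<partial>lborel)"
    by (rule nn_integral_cong) (auto split: split_indicator)
  also have "\<dots> = (\<integral>\<^sup>+ s. ennreal (2 * pi * s) * indicator {0<..<1} s * ennreal (g s) \<partial>lborel)"
    using g by (intro radial_nn) auto
  also have "\<dots> = (\<integral>\<^sup>+ s. ennreal (indicator {0<..<1} s * (2 * pi * s * g s)) \<partial>lborel)"
    using nn by (intro nn_integral_cong) (auto split: split_indicator simp: ennreal_mult'[symmetric] ennreal_mult)
  finally show ?thesis .
qed

lemma diag_real:
  "integrable lborel (\<lambda>w::complex. indicator (ball 0 1) w * ((1 - (cmod w)^2) * ((cmod w)^2)^k))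
   \<and> integral\<^sup>L lborel (\<lambda>w::complex. indicator (ball 0 1) w * ((1 - (cmod w)^2) * ((cmod w)^2)^k))
       = pi / ((real k + 1) * (real k + 2))"
proof -
  let ?g = "\<lambda>s::real. (1 - s^2) * (s^2)^k"
  have "(\<integral>\<^sup>+ w. ennreal (indicator (ball (0::complex) 1) w * ?g (cmod w)) \<partial>lborel)
       = (\<integral>\<^sup>+ s. ennreal (indicator {0<..<1} s * (2 * pi * s * ?g s)) \<partial>lborel)"
    by (rule radial_real) (auto intro!: mult_nonneg_nonneg simp: power_le_one abs_square_le_1)
  also have "\<dots> = ennreal (pi / ((real k + 1) * (real k + 2)))"
  proof (rule nn_integral_has_integral_lebesgue)
    have e: "(\<lambda>s. 2 * pi * s * ?g s) = (\<lambda>s. 2 * pi * s * (1 - s^2) * (s^2)^k)"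
      by (intro ext) (simp only: mult.assoc)
    show "((\<lambda>s. 2 * pi * s * ?g s) has_integral pi / ((real k + 1) * (real k + 2))) {0<..<1}"
      unfolding e by (rule has_integral_diag)
  qed (auto intro!: mult_nonneg_nonneg simp: power_le_one abs_square_le_1)
  finally have "(\<integral>\<^sup>+ w. ennreal (indicator (ball (0::complex) 1) w * ?g (cmod w)) \<partial>lborel)
       = ennreal (pi / ((real k + 1) * (real k + 2)))" .
  moreover have "(\<lambda>w::complex. indicator (ball 0 1) w * ((1 - (cmod w)^2) * ((cmod w)^2)^k)) \<in> borel_measurable borel"
    by (intro bm_ind_ball_times borel_measurable_continuous_onI continuous_intros)
  ultimately show ?thesis
    by (subst (asm) nn_integral_eq_integrable)
       (auto split: split_indicator intro!: mult_nonneg_nonneg simp: power_le_one abs_square_le_1 dist_norm)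
qed

lemma log_real:
  assumes r: "0 \<le> r" "r < 1"
  shows "integrable lborel (\<lambda>w::complex. indicator (ball 0 r) w / (1 - (cmod w)^2))
   \<and> integral\<^sup>L lborel (\<lambda>w::complex. indicator (ball 0 r) w / (1 - (cmod w)^2)) = - pi * ln (1 - r^2)"
proof -
  let ?g = "\<lambda>s::real. indicator {..<r} s / (1 - s^2)"
  have eq: "indicator (ball 0 r) w / (1 - (cmod w)^2) = indicator (ball (0::complex) 1) w * ?g (cmod w)" for w :: complex
    using r by (auto split: split_indicator simp: dist_norm)
  have gm: "?g \<in> borel_measurable borel" by measurable
  have "(\<integral>\<^sup>+ w. ennreal (indicator (ball (0::complex) 1) w * ?g (cmod w)) \<partial>lborel)
       = (\<integral>\<^sup>+ s. ennreal (indicator {0<..<1} s * (2 * pi * s * ?g s)) \<partial>lborel)"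
    by (rule radial_real[OF gm]) (auto split: split_indicator simp: power_le_one abs_square_less_1)
  also have "\<dots> = (\<integral>\<^sup>+ s. ennreal (indicator {0<..<r} s * (2 * pi * s / (1 - s^2))) \<partial>lborel)"
    using r by (intro nn_integral_cong) (auto split: split_indicator)
  also have "\<dots> = ennreal (- pi * ln (1 - r^2))"
    by (rule nn_integral_has_integral_lebesgue[OF _ has_integral_log[OF r]])
       (use r in \<open>auto intro!: divide_nonneg_nonneg simp: abs_square_less_1 power_le_one\<close>)
  finally have "(\<integral>\<^sup>+ w. ennreal (indicator (ball 0 r) w / (1 - (cmod w)^2)) \<partial>lborel) = ennreal (- pi * ln (1 - r^2))"
    by (simp add: eq)
  moreover have "0 \<le> - pi * ln (1 - r^2)"
  proof -
    have "r^2 < 1" using r by (simp add: abs_square_less_1)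
    then have "ln (1 - r^2) \<le> 0" using r by (subst ln_le_zero_iff) auto
    then show ?thesis by (simp add: mult_nonneg_nonpos)
  qed
  moreover have "(\<lambda>w::complex. indicator (ball 0 r) w / (1 - (cmod w)^2)) \<in> borel_measurable borel"
  proof -
    have "(\<lambda>w::complex. indicator (ball 0 r) w * (1 / (1 - (cmod w)^2))) \<in> borel_measurable borel"
      by (intro bm_ind_ball_times) measurable
    then show ?thesis by simp
  qed
  moreover have "AE w in lborel. 0 \<le> indicator (ball (0::complex) r) w / (1 - (cmod w)^2)"
    using r by (intro AE_I2) (auto split: split_indicator simp: dist_norm abs_square_less_1 power_le_one)
  ultimately show ?thesis
    by (subst (asm) nn_integral_eq_integrable) auto
qed



lemma bm_leb: "f \<in> borel_measurable borel \<Longrightarrow> f \<in> borel_measurable (lebesgue :: complex measure)"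
  by (rule measurable_completion) simp

lemma bm_cont_leb: "continuous_on UNIV f \<Longrightarrow> f \<in> borel_measurable (lebesgue :: complex measure)"
  by (intro bm_leb borel_measurable_continuous_onI)

lemma integrable_ball_bnd:
  fixes f :: "complex \<Rightarrow> 'b::{banach, second_countable_topology}"
  assumes f: "f \<in> borel_measurable lebesgue" and B: "\<And>w. norm (f w) \<le> B"
    and s: "\<And>w. f w \<noteq> 0 \<Longrightarrow> w \<in> ball 0 1"
  shows "integrable lebesgue f"
proof -
  have "integrable lborel (\<lambda>w::complex. indicator (ball 0 1) w * B)"
    by (intro integrable_mult_left integrable_real_indicator) (auto simp: emeasure_ball_complex)
  then have i: "integrable lebesgue (\<lambda>w::complex. indicator (ball 0 1) w * B)"
    by (subst integrable_completion) auto
  show ?thesis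
  proof (rule Bochner_Integration.integrable_bound[OF i f], rule AE_I2)
    fix w :: complex
    have "0 \<le> B" using B[of w] norm_ge_zero order_trans by blast
    show "norm (f w) \<le> norm (indicator (ball 0 1) w * B)"
      using B[of w] s[of w] \<open>0 \<le> B\<close> by (cases "w \<in> ball 0 1") auto
  qed
qed

definition cdiag :: "nat \<Rightarrow> real" where "cdiag k = pi / ((real k + 1) * (real k + 2))"

lemma cdiag_pos: "0 < cdiag k" by (simp add: cdiag_def)

lemma orth_leb:
  "integral\<^sup>L lebesgue (\<lambda>w. complex_of_real (indicator (ball 0 1) w * (1 - (cmod w)^2)) * cnj w ^ j * w ^ k)
     = (if j = k then complex_of_real (cdiag k) else 0)"
proof -
  have m: "(\<lambda>w. complex_of_real (indicator (ball 0 1) w * (1 - (cmod w)^2)) * cnj w ^ j * w ^ k) \<in> borel_measurable borel"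
  proof -
    have i: "(\<lambda>w::complex. indicator (ball 0 1) w * (1 - (cmod w)^2)) \<in> borel_measurable borel"
      by (rule bm_ind_ball_times, rule borel_measurable_continuous_onI) (intro continuous_intros)
    have "(\<lambda>w. complex_of_real (indicator (ball 0 1) w * (1 - (cmod w)^2))) \<in> borel_measurable borel"
      by (rule measurable_compose[OF i borel_measurable_of_real])
    then show ?thesis using borel_measurable_times[OF _ bm_cnjpow] by (simp add: mult.assoc)
  qed
  have "integral\<^sup>L lebesgue (\<lambda>w. complex_of_real (indicator (ball 0 1) w * (1 - (cmod w)^2)) * cnj w ^ j * w ^ k)
      = integral\<^sup>L lborel (\<lambda>w. complex_of_real (indicator (ball 0 1) w * (1 - (cmod w)^2)) * cnj w ^ j * w ^ k)"
    using m by (subst integral_completion) auto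
  also have "\<dots> = (if j = k then complex_of_real (cdiag k) else 0)"
  proof (cases "j = k")
    case False
    have e: "(\<lambda>w::complex. complex_of_real (indicator (ball 0 1) w * (1 - (cmod w)^2)) * cnj w ^ j * w ^ k)
        = (\<lambda>w. complex_of_real ((\<lambda>s. indicator {..<1} s * (1 - s^2)) (cmod w)) * cnj w ^ j * w ^ k)"
      by (intro ext) (auto split: split_indicator simp: dist_norm)
    show ?thesis unfolding e using False by (subst orth_rot) auto
  next
    case True
    have e: "(\<lambda>w::complex. complex_of_real (indicator (ball 0 1) w * (1 - (cmod w)^2)) * cnj w ^ j * w ^ k)
        = (\<lambda>w. complex_of_real (indicator (ball 0 1) w * ((1 - (cmod w)^2) * ((cmod w)^2)^k)))"
    proof (intro ext)
      fix w :: complex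
      have cw: "cnj w * w = complex_of_real ((cmod w)^2)"
        using complex_norm_square[of w] by (simp add: mult.commute)
      have "cnj w ^ k * w ^ k = (cnj w * w) ^ k" by (simp add: power_mult_distrib)
      also have "\<dots> = complex_of_real (((cmod w)^2)^k)" unfolding cw by (simp only: of_real_power)
      finally have "cnj w ^ k * w ^ k = complex_of_real (((cmod w)^2)^k)" .
      then show "complex_of_real (indicator (ball 0 1) w * (1 - (cmod w)^2)) * cnj w ^ j * w ^ k
          = complex_of_real (indicator (ball 0 1) w * ((1 - (cmod w)^2) * ((cmod w)^2)^k))"
        using True by (simp add: mult.assoc)
    qed
    have v: "integral\<^sup>L lborel (\<lambda>w::complex. indicator (ball 0 1) w * ((1 - (cmod w)^2) * ((cmod w)^2)^k)) = cdiag k"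
      using diag_real[of k] by (simp add: cdiag_def)
    show ?thesis unfolding e integral_complex_of_real v using True by simp
  qed
  finally show ?thesis .
qed



lemma amgm_aux:
  fixes p q c :: real
  assumes "0 < c"
  shows "2 * p * q \<le> p^2 / c + c * q^2"
proof -
  have "p^2 / c + c * q^2 - 2 * p * q = (p - c * q)^2 / c"
    using assms by (simp add: field_simps power2_eq_square)
  also have "\<dots> \<ge> 0" using assms by simp
  finally show ?thesis by simp
qed

lemma bessel:
  fixes \<mu> :: "complex \<Rightarrow> complex" and r :: real
  assumes m\<mu>: "\<mu> \<in> borel_measurable lebesgue" and bnd: "\<And>w. cmod (\<mu> w) \<le> 1"
    and supp: "\<And>w. \<mu> w \<noteq> 0 \<Longrightarrow> cmod w < r" and r: "0 < r" "r < 1"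
  shows "(\<Sum>k<N. (real k + 1)^2 * (cmod (integral\<^sup>L lebesgue (\<lambda>w. \<mu> w * w^k)))^2) \<le> - (pi^2 * ln (1 - r^2))"
proof -
  define a where "a k = integral\<^sup>L lebesgue (\<lambda>w. \<mu> w * w^k)" for k
  define lam where "lam k = a k / complex_of_real (cdiag k)" for k
  define g where "g w = (\<Sum>k<N. lam k * cnj w ^ k)" for w
  define \<omega> where "\<omega> w = indicator (ball 0 1) w * (1 - (cmod w)^2)" for w :: complex
  define T where "T = (\<Sum>k<N. (cmod (a k))^2 / cdiag k)"
  define G where "G = (\<Sum>k<N. cmod (lam k))"
  have inball: "w \<in> ball 0 1" if "\<mu> w \<noteq> 0" for w
    using supp[OF that] r by (simp add: dist_norm)
  have mpow: "(\<lambda>w::complex. w^k) \<in> borel_measurable lebesgue" for k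
    by (rule bm_cont_leb) (intro continuous_intros)
  have int_ak: "integrable lebesgue (\<lambda>w. \<mu> w * w^k)" for k
  proof (rule integrable_ball_bnd)
    show "(\<lambda>w. \<mu> w * w ^ k) \<in> borel_measurable lebesgue"
      using borel_measurable_times[OF m\<mu> mpow] .
    fix w
    show "\<mu> w * w ^ k \<noteq> 0 \<Longrightarrow> w \<in> ball 0 1" using inball by auto
    show "norm (\<mu> w * w ^ k) \<le> 1"
    proof (cases "\<mu> w = 0")
      case False
      then have "cmod w \<le> 1" using inball[OF False] by (simp add: dist_norm)
      then have "cmod w ^ k \<le> 1" by (simp add: power_le_one)
      then show ?thesis using bnd[of w] by (simp add: norm_mult norm_power mult_le_one)
    qed simp
  qed
  have mg: "g \<in> borel_measurable lebesgue"
    unfolding g_def by (rule bm_cont_leb) (intro continuous_intros)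
  have gbnd: "cmod (g w) \<le> G" if "w \<in> ball 0 1" for w
  proof -
    have "cmod (g w) \<le> (\<Sum>k<N. cmod (lam k * cnj w ^ k))" unfolding g_def by (rule norm_sum)
    also have "\<dots> \<le> G" unfolding G_def
    proof (rule sum_mono)
      fix k
      have "cmod w \<le> 1" using that by (simp add: dist_norm)
      then have "cmod w ^ k \<le> 1" by (simp add: power_le_one)
      then show "cmod (lam k * cnj w ^ k) \<le> cmod (lam k)"
        by (simp add: norm_mult norm_power mult_left_le)
    qed
    finally show ?thesis .
  qed
  have G0: "0 \<le> G" unfolding G_def by (simp add: sum_nonneg)

  have B1: "integral\<^sup>L lebesgue (\<lambda>w. \<mu> w * cnj (g w)) = complex_of_real T"
  proof -
    have e: "(\<lambda>w. \<mu> w * cnj (g w)) = (\<lambda>w. \<Sum>k<N. cnj (lam k) * (\<mu> w * w^k))"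
      by (intro ext) (simp add: g_def cnj_sum sum_distrib_left mult_ac)
    have "integral\<^sup>L lebesgue (\<lambda>w. \<mu> w * cnj (g w)) = (\<Sum>k<N. cnj (lam k) * a k)"
      unfolding e a_def by (simp add: integral_sum' int_ak)
    also have "\<dots> = (\<Sum>k<N. complex_of_real ((cmod (a k))^2 / cdiag k))"
    proof (rule sum.cong[OF refl])
      fix k
      have "cnj (a k) * a k = complex_of_real ((cmod (a k))^2)"
        using complex_norm_square[of "a k"] by (simp add: mult.commute)
      then show "cnj (lam k) * a k = complex_of_real ((cmod (a k))^2 / cdiag k)"
        by (simp add: lam_def)
    qed
    also have "\<dots> = complex_of_real T" by (simp add: T_def)
    finally show ?thesis .
  qed

  have B2: "integral\<^sup>L lebesgue (\<lambda>w. \<omega> w * (cmod (g w))^2) = T"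
  proof -
    define Ofn where "Ofn j k = (\<lambda>w. complex_of_real (indicator (ball 0 1) w * (1 - (cmod w)^2)) * cnj w ^ j * w ^ k)" for j k
    have intO: "integrable lebesgue (Ofn j k)" for j k
    proof (rule integrable_ball_bnd)
      show "Ofn j k \<in> borel_measurable lebesgue"
      proof -
        have i: "(\<lambda>w::complex. indicator (ball 0 1) w * (1 - (cmod w)^2)) \<in> borel_measurable borel"
          by (rule bm_ind_ball_times, rule borel_measurable_continuous_onI) (intro continuous_intros)
        have "(\<lambda>w. complex_of_real (indicator (ball 0 1) w * (1 - (cmod w)^2))) \<in> borel_measurable borel"
          by (rule measurable_compose[OF i borel_measurable_of_real])
        then have "Ofn j k \<in> borel_measurable borel"
          using borel_measurable_times[OF _ bm_cnjpow] unfolding Ofn_def by (simp add: mult.assoc)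
        then show ?thesis by (rule bm_leb)
      qed
      fix w :: complex
      show "Ofn j k w \<noteq> 0 \<Longrightarrow> w \<in> ball 0 1" by (cases "w \<in> ball 0 1") (auto simp: Ofn_def)
      show "norm (Ofn j k w) \<le> 1"
      proof (cases "w \<in> ball 0 1")
        case True
        then have c1: "cmod w \<le> 1" by (simp add: dist_norm)
        have "norm (Ofn j k w) = (1 - (cmod w)^2) * (cmod w ^ j * cmod w ^ k)"
        proof -
          have "norm (Ofn j k w) = \<bar>1 - (cmod w)^2\<bar> * (cmod w ^ j * cmod w ^ k)"
            using True unfolding Ofn_def norm_mult norm_of_real norm_power complex_mod_cnj by simp
          moreover have "(cmod w)^2 \<le> 1" using c1 by (simp add: power_le_one)
          ultimately show ?thesis by simp
        qed
        also have "\<dots> \<le> 1 * 1"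
          using c1 by (intro mult_mono) (auto simp: power_le_one mult_le_one)
        finally show ?thesis by simp
      qed (simp add: Ofn_def)
    qed
    have e: "(\<lambda>w. complex_of_real (\<omega> w * (cmod (g w))^2)) = (\<lambda>w. \<Sum>j<N. \<Sum>k<N. (lam j * cnj (lam k)) * Ofn j k w)"
    proof (intro ext)
      fix w
      have "complex_of_real (\<omega> w * (cmod (g w))^2) = complex_of_real (\<omega> w) * (g w * cnj (g w))"
        by (simp only: of_real_mult complex_norm_square)
      also have "g w * cnj (g w) = (\<Sum>j<N. \<Sum>k<N. (lam j * cnj w ^ j) * (cnj (lam k) * w ^ k))"
        unfolding g_def cnj_sum by (simp add: sum_product)
      finally show "complex_of_real (\<omega> w * (cmod (g w))^2) = (\<Sum>j<N. \<Sum>k<N. (lam j * cnj (lam k)) * Ofn j k w)"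
        by (simp add: Ofn_def \<omega>_def sum_distrib_left mult_ac)
    qed
    have "integral\<^sup>L lebesgue (\<lambda>w. complex_of_real (\<omega> w * (cmod (g w))^2)) = (\<Sum>j<N. \<Sum>k<N. (lam j * cnj (lam k)) * integral\<^sup>L lebesgue (Ofn j k))"
      unfolding e by (simp add: integral_sum' intO)
    also have "\<dots> = (\<Sum>j<N. \<Sum>k<N. (lam j * cnj (lam k)) * (if j = k then complex_of_real (cdiag k) else 0))"
      unfolding Ofn_def orth_leb ..
    also have "\<dots> = (\<Sum>k<N. (lam k * cnj (lam k)) * complex_of_real (cdiag k))"
      by (simp add: if_distrib sum.delta cong: if_cong)
    also have "\<dots> = (\<Sum>k<N. complex_of_real ((cmod (a k))^2 / cdiag k))"
    proof (rule sum.cong[OF refl])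
      fix k
      have c0: "cdiag k \<noteq> 0" using cdiag_pos[of k] by simp
      have "lam k * cnj (lam k) = complex_of_real ((cmod (lam k))^2)" by (simp only: complex_norm_square)
      moreover have "cmod (lam k) = cmod (a k) / cdiag k"
        using cdiag_pos[of k] by (simp add: lam_def norm_divide)
      ultimately show "(lam k * cnj (lam k)) * complex_of_real (cdiag k) = complex_of_real ((cmod (a k))^2 / cdiag k)"
        using c0 by (simp add: power2_eq_square field_simps)
    qed
    also have "\<dots> = complex_of_real T" by (simp add: T_def)
    finally have X: "integral\<^sup>L lebesgue (\<lambda>w. complex_of_real (\<omega> w * (cmod (g w))^2)) = complex_of_real T" .
    then show ?thesis unfolding integral_complex_of_real of_real_eq_iff .
  qed

  define F2 where "F2 w = indicator (ball 0 1) w * (cmod (\<mu> w))^2 / (1 - (cmod w)^2)" for w :: complex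
  define F3 where "F3 w = \<omega> w * (cmod (g w))^2" for w
  have r2: "r^2 < 1" using r by (simp add: abs_square_less_1)
  have mF2: "F2 \<in> borel_measurable lebesgue"
  proof -
    have i1: "(\<lambda>w::complex. indicator (ball 0 1) w :: real) \<in> borel_measurable lebesgue"
      using bm_leb[OF bm_ind_ball] by simp
    have i2: "(\<lambda>w. (cmod (\<mu> w))^2) \<in> borel_measurable lebesgue" using m\<mu> by measurable
    have i3: "(\<lambda>w::complex. 1 - (cmod w)^2) \<in> borel_measurable lebesgue"
      by (rule bm_cont_leb) (intro continuous_intros)
    show ?thesis unfolding F2_def by (rule borel_measurable_divide[OF borel_measurable_times[OF i1 i2] i3])
  qed
  have F2le: "F2 w \<le> indicator (ball 0 r) w / (1 - (cmod w)^2)" for w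
  proof (cases "\<mu> w = 0")
    case True
    then show ?thesis
      using r by (cases "w \<in> ball 0 r") (auto simp: F2_def dist_norm abs_square_less_1 power_le_one)
  next
    case False
    have wr: "cmod w < r" using supp[OF False] .
    then have w1: "(cmod w)^2 < 1" using r by (simp add: abs_square_less_1)
    have "(cmod (\<mu> w))^2 \<le> 1" using bnd[of w] by (simp add: power_le_one)
    moreover have "w \<in> ball 0 1" "w \<in> ball 0 r" using wr r by (auto simp: dist_norm)
    ultimately show ?thesis using w1 by (simp add: F2_def divide_right_mono)
  qed
  have F2nn: "0 \<le> F2 w" for w
    by (cases "w \<in> ball 0 1") (auto simp: F2_def dist_norm abs_square_less_1 power_le_one)
  have intF2: "integrable lebesgue F2"
  proof (rule integrable_ball_bnd[OF mF2])
    fix w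
    show "F2 w \<noteq> 0 \<Longrightarrow> w \<in> ball 0 1" using inball by (auto simp: F2_def)
    show "norm (F2 w) \<le> 1 / (1 - r^2)"
    proof (cases "w \<in> ball 0 r")
      case True
      then have "cmod w < r" by (simp add: dist_norm)
      then have "(cmod w)^2 < r^2" by (simp add: power_strict_mono)
      then have "1 / (1 - (cmod w)^2) \<le> 1 / (1 - r^2)" using r2 by (intro divide_left_mono) auto
      then show ?thesis using F2le[of w] F2nn[of w] True by simp
    next
      case False
      then show ?thesis using F2le[of w] F2nn[of w] r2 by simp
    qed
  qed
  have m\<omega>: "\<omega> \<in> borel_measurable lebesgue"
    unfolding \<omega>_def by (rule bm_leb, rule bm_ind_ball_times, rule borel_measurable_continuous_onI) (intro continuous_intros)
  have intF3: "integrable lebesgue F3"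
  proof (rule integrable_ball_bnd)
    show "F3 \<in> borel_measurable lebesgue"
      unfolding F3_def using m\<omega> mg by measurable
    fix w
    show "F3 w \<noteq> 0 \<Longrightarrow> w \<in> ball 0 1" by (cases "w \<in> ball 0 1") (auto simp: F3_def \<omega>_def)
    show "norm (F3 w) \<le> G^2"
    proof (cases "w \<in> ball 0 1")
      case True
      then have c1: "cmod w < 1" by (simp add: dist_norm)
      have "norm (F3 w) = (1 - (cmod w)^2) * (cmod (g w))^2"
        using True c1 by (simp add: F3_def \<omega>_def abs_square_less_1 power_le_one)
      also have "\<dots> \<le> 1 * G^2"
        using c1 gbnd[OF True] by (intro mult_mono power_mono) (auto simp: abs_square_less_1 power_le_one)
      finally show ?thesis by simp
    qed (simp add: F3_def \<omega>_def)
  qed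
  have int\<mu>g: "integrable lebesgue (\<lambda>w. \<mu> w * cnj (g w))"
  proof (rule integrable_ball_bnd)
    show "(\<lambda>w. \<mu> w * cnj (g w)) \<in> borel_measurable lebesgue"
    proof -
      have "(\<lambda>w. cnj (g w)) \<in> borel_measurable lebesgue"
        unfolding g_def by (rule bm_cont_leb) (intro continuous_intros)
      then show ?thesis by (rule borel_measurable_times[OF m\<mu>])
    qed
    fix w
    show "\<mu> w * cnj (g w) \<noteq> 0 \<Longrightarrow> w \<in> ball 0 1" using inball by auto
    show "norm (\<mu> w * cnj (g w)) \<le> G"
    proof (cases "\<mu> w = 0")
      case False
      have "norm (\<mu> w * cnj (g w)) = cmod (\<mu> w) * cmod (g w)" by (simp add: norm_mult)
      also have "\<dots> \<le> 1 * G" using bnd[of w] gbnd[OF inball[OF False]] by (intro mult_mono) auto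
      finally show ?thesis by simp
    qed (simp add: G0)
  qed
  have F3nn: "0 \<le> F3 w" for w
    by (cases "w \<in> ball 0 1") (auto simp: F3_def \<omega>_def dist_norm abs_square_less_1 power_le_one)
  have F1le: "2 * Re (\<mu> w * cnj (g w)) \<le> F2 w + F3 w" for w
  proof (cases "\<mu> w = 0")
    case True
    then show ?thesis using F2nn[of w] F3nn[of w] by simp
  next
    case False
    have b: "w \<in> ball 0 1" using inball[OF False] .
    then have c1: "(cmod w)^2 < 1" by (simp add: dist_norm abs_square_less_1)
    have "2 * Re (\<mu> w * cnj (g w)) \<le> 2 * (cmod (\<mu> w) * cmod (g w))"
      using complex_Re_le_cmod[of "\<mu> w * cnj (g w)"] by (simp add: norm_mult)
    also have "\<dots> \<le> (cmod (\<mu> w))^2 / (1 - (cmod w)^2) + (1 - (cmod w)^2) * (cmod (g w))^2"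
      using amgm_aux[of "1 - (cmod w)^2" "cmod (\<mu> w)" "cmod (g w)"] c1 by simp
    also have "\<dots> = F2 w + F3 w" using b by (simp add: F2_def F3_def \<omega>_def)
    finally show ?thesis .
  qed
  have "2 * T = integral\<^sup>L lebesgue (\<lambda>w. 2 * Re (\<mu> w * cnj (g w)))"
  proof -
    have e1: "integral\<^sup>L lebesgue (\<lambda>w. 2 * Re (\<mu> w * cnj (g w))) = 2 * integral\<^sup>L lebesgue (\<lambda>w. Re (\<mu> w * cnj (g w)))"
      by (rule integral_mult_right_zero)
    have e2: "integral\<^sup>L lebesgue (\<lambda>w. Re (\<mu> w * cnj (g w))) = Re (integral\<^sup>L lebesgue (\<lambda>w. \<mu> w * cnj (g w)))"
      by (rule integral_bounded_linear[OF bounded_linear_Re int\<mu>g])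
    show ?thesis unfolding e1 e2 B1 by simp
  qed
  also have "\<dots> \<le> integral\<^sup>L lebesgue (\<lambda>w. F2 w + F3 w)"
  proof (rule integral_mono)
    show "integrable lebesgue (\<lambda>w. 2 * Re (\<mu> w * cnj (g w)))"
      by (intro integrable_mult_right integrable_Re int\<mu>g)
    show "integrable lebesgue (\<lambda>w. F2 w + F3 w)" using intF2 intF3 by (rule Bochner_Integration.integrable_add)
    show "\<And>w. w \<in> space lebesgue \<Longrightarrow> 2 * Re (\<mu> w * cnj (g w)) \<le> F2 w + F3 w" using F1le by blast
  qed
  also have "\<dots> = integral\<^sup>L lebesgue F2 + T"
  proof -
    have "integral\<^sup>L lebesgue (\<lambda>w. F2 w + F3 w) = integral\<^sup>L lebesgue F2 + integral\<^sup>L lebesgue F3"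
      by (rule Bochner_Integration.integral_add[OF intF2 intF3])
    moreover have "integral\<^sup>L lebesgue F3 = T" unfolding F3_def by (rule B2)
    ultimately show ?thesis by simp
  qed
  finally have TA: "T \<le> integral\<^sup>L lebesgue F2" by simp

  have m\<psi>: "(\<lambda>w::complex. indicator (ball 0 r) w / (1 - (cmod w)^2)) \<in> borel_measurable borel"
  proof -
    have "(\<lambda>w::complex. indicator (ball 0 r) w * (1 / (1 - (cmod w)^2))) \<in> borel_measurable borel"
      by (intro bm_ind_ball_times) measurable
    then show ?thesis by simp
  qed
  have L: "integrable lborel (\<lambda>w::complex. indicator (ball 0 r) w / (1 - (cmod w)^2))
     \<and> integral\<^sup>L lborel (\<lambda>w::complex. indicator (ball 0 r) w / (1 - (cmod w)^2)) = - pi * ln (1 - r^2)"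
    using log_real r by auto
  have "integral\<^sup>L lebesgue F2 \<le> integral\<^sup>L lebesgue (\<lambda>w::complex. indicator (ball 0 r) w / (1 - (cmod w)^2))"
    by (rule integral_mono[OF intF2]) (use L m\<psi> F2le in \<open>auto simp: integrable_completion\<close>)
  also have "\<dots> = - pi * ln (1 - r^2)"
    using L m\<psi> by (simp add: integral_completion)
  finally have TB: "T \<le> - pi * ln (1 - r^2)" using TA by simp

  have "(\<Sum>k<N. (real k + 1)^2 * (cmod (a k))^2) \<le> (\<Sum>k<N. pi * ((cmod (a k))^2 / cdiag k))"
  proof (rule sum_mono)
    fix k
    have c: "0 < cdiag k" by (rule cdiag_pos)
    have gen: "x^2 * (pi / (x * y)) = pi * (x / y)" if "0 < x" "0 < y" for x y :: real
      using that by (simp add: field_simps power2_eq_square)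
    have "(real k + 1)^2 * cdiag k = pi * ((real k + 1) / (real k + 2))"
      unfolding cdiag_def by (rule gen) auto
    also have "\<dots> \<le> pi * 1" by (intro mult_left_mono) auto
    finally have kc: "(real k + 1)^2 * cdiag k \<le> pi" by simp
    have "(real k + 1)^2 * (cmod (a k))^2 = ((real k + 1)^2 * cdiag k) * ((cmod (a k))^2 / cdiag k)"
      using c by (simp add: field_simps)
    also have "\<dots> \<le> pi * ((cmod (a k))^2 / cdiag k)"
      using kc c by (intro mult_right_mono) auto
    finally show "(real k + 1)^2 * (cmod (a k))^2 \<le> pi * ((cmod (a k))^2 / cdiag k)" .
  qed
  also have "\<dots> = pi * T" by (simp add: T_def sum_distrib_left)
  also have "\<dots> \<le> pi * (- pi * ln (1 - r^2))" using TB by (intro mult_left_mono) auto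
  finally show ?thesis by (simp add: a_def power2_eq_square)
qed



lemma has_integral_cis_int:
  fixes d :: int
  shows "((\<lambda>t. cis (of_int d * t)) has_integral (if d = 0 then complex_of_real (2*pi) else 0)) {0..2*pi}"
proof (cases "d = 0")
  case True
  have "((\<lambda>t::real. (1::complex)) has_integral (2*pi) *\<^sub>R 1) {0..2*pi}"
    using has_integral_const_real[of "1::complex" 0 "2*pi"] by simp
  then show ?thesis using True by (simp add: scaleR_conv_of_real)
next
  case False
  define f where "f z = exp (\<i> * of_int d * z) / (\<i> * of_int d)" for z :: complex
  have e: "cis (of_int d * t) = exp (\<i> * of_int d * complex_of_real t)" for t :: real
    by (simp add: cis_conv_exp mult_ac)
  have fe: "f (complex_of_real t) = cis (of_int d * t) / (\<i> * of_int d)" for t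
    by (simp add: f_def e)
  have der: "(f has_field_derivative exp (\<i> * of_int d * z)) (at z)" for z
  proof -
    have "(f has_field_derivative exp (\<i> * of_int d * z) * (\<i> * of_int d) / (\<i> * of_int d)) (at z)"
      unfolding f_def by (auto intro!: derivative_eq_intros)
    then show ?thesis using False by simp
  qed
  have "((\<lambda>t. cis (of_int d * t)) has_integral (f (complex_of_real (2*pi)) - f (complex_of_real 0))) {0..2*pi}"
  proof (rule fundamental_theorem_of_calculus)
    show "0 \<le> 2 * pi" by simp
    fix t :: real
    assume "t \<in> {0..2*pi}"
    have "((\<lambda>x. f (complex_of_real x)) has_vector_derivative exp (\<i> * of_int d * complex_of_real t)) (at t within {0..2*pi})"
      by (rule has_vector_derivative_real_field[OF der])
    then show "((\<lambda>t. f (complex_of_real t)) has_vector_derivative cis (of_int d * t)) (at t within {0..2*pi})"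
      by (simp add: e)
  qed
  moreover have "f (complex_of_real (2*pi)) - f (complex_of_real 0) = 0"
  proof -
    have "cis (of_int d * (2*pi)) = 1"
      using cos_int_2pin[of d] sin_int_2pin[of d] by (simp add: cis.ctr mult.commute complex_eq_iff)
    then show ?thesis unfolding fe by simp
  qed
  ultimately show ?thesis using False by simp
qed

lemma finite_parseval:
  fixes b :: "nat \<Rightarrow> complex"
  shows "((\<lambda>t. (cmod (\<Sum>k<N. b k * cis (- (real k + 2) * t)))^2) has_integral (2 * pi * (\<Sum>k<N. (cmod (b k))^2))) {0..2*pi}"
proof -
  define F where "F t = (\<Sum>k<N. b k * cis (- (real k + 2) * t))" for t
  have tm: "b j * cis (- (real j + 2) * t) * (cnj (b k) * cis (- (- (real k + 2) * t)))
      = (b j * cnj (b k)) * cis (of_int (int k - int j) * t)" for j k t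
  proof -
    have "cis (- (real j + 2) * t) * cis (- (- (real k + 2) * t)) = cis (of_int (int k - int j) * t)"
      by (simp add: cis_mult algebra_simps)
    then show ?thesis by (metis (no_types, lifting) mult.assoc mult.left_commute)
  qed
  have e: "complex_of_real ((cmod (F t))^2) = (\<Sum>j<N. \<Sum>k<N. (b j * cnj (b k)) * cis (of_int (int k - int j) * t))" for t
  proof -
    have "complex_of_real ((cmod (F t))^2) = F t * cnj (F t)" by (rule complex_norm_square)
    also have "\<dots> = (\<Sum>j<N. \<Sum>k<N. b j * cis (- (real j + 2) * t) * (cnj (b k) * cis (- (- (real k + 2) * t))))"
      unfolding F_def cnj_sum sum_product by (simp add: cis_cnj)
    also have "\<dots> = (\<Sum>j<N. \<Sum>k<N. (b j * cnj (b k)) * cis (of_int (int k - int j) * t))"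
      by (simp only: tm)
    finally show ?thesis .
  qed
  have "((\<lambda>t. \<Sum>j<N. \<Sum>k<N. (b j * cnj (b k)) * cis (of_int (int k - int j) * t)) has_integral
        (\<Sum>j<N. \<Sum>k<N. (b j * cnj (b k)) * (if int k - int j = 0 then complex_of_real (2*pi) else 0))) {0..2*pi}"
    by (intro has_integral_sum finite_lessThan has_integral_mult_right has_integral_cis_int)
  also have "(\<Sum>j<N. \<Sum>k<N. (b j * cnj (b k)) * (if int k - int j = 0 then complex_of_real (2*pi) else 0))
      = (\<Sum>j<N. (b j * cnj (b j)) * complex_of_real (2*pi))"
  proof (rule sum.cong[OF refl])
    fix j assume j: "j \<in> {..<N}"
    have "(\<Sum>k<N. (b j * cnj (b k)) * (if int k - int j = 0 then complex_of_real (2*pi) else 0))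
        = (\<Sum>k<N. (if k = j then (b j * cnj (b k)) * complex_of_real (2*pi) else 0))"
      by (intro sum.cong) auto
    also have "\<dots> = (b j * cnj (b j)) * complex_of_real (2*pi)" using j by (simp add: sum.delta')
    finally show "(\<Sum>k<N. (b j * cnj (b k)) * (if int k - int j = 0 then complex_of_real (2*pi) else 0))
        = (b j * cnj (b j)) * complex_of_real (2*pi)" .
  qed
  also have "\<dots> = complex_of_real (2 * pi * (\<Sum>k<N. (cmod (b k))^2))"
    by (simp add: complex_norm_square[symmetric] sum_distrib_left mult_ac)
  finally have H: "((\<lambda>t. complex_of_real ((cmod (F t))^2)) has_integral complex_of_real (2 * pi * (\<Sum>k<N. (cmod (b k))^2))) {0..2*pi}"
    unfolding e .
  have "((Re \<circ> (\<lambda>t. complex_of_real ((cmod (F t))^2))) has_integral Re (complex_of_real (2 * pi * (\<Sum>k<N. (cmod (b k))^2)))) {0..2*pi}"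
    by (rule has_integral_linear[OF H bounded_linear_Re])
  then show ?thesis by (simp add: o_def F_def)
qed

lemma circle_parseval:
  fixes b :: "nat \<Rightarrow> complex"
  assumes sb: "summable (\<lambda>k. cmod (b k))" and bound: "\<And>N. (\<Sum>k<N. (cmod (b k))^2) \<le> B"
  shows "integral {0..2*pi} (\<lambda>t. (cmod (\<Sum>k. b k * cis (- (real k + 2) * t)))^2) \<le> 2 * pi * B"
proof -
  define S where "S = (\<Sum>k. cmod (b k))"
  define f where "f N t = (cmod (\<Sum>k<N. b k * cis (- (real k + 2) * t)))^2" for N t
  define g where "g t = (cmod (\<Sum>k. b k * cis (- (real k + 2) * t)))^2" for t
  have fi: "(f N has_integral (2 * pi * (\<Sum>k<N. (cmod (b k))^2))) {0..2*pi}" for N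
    unfolding f_def by (rule finite_parseval)
  have hi: "(\<lambda>t::real. S^2) integrable_on {0..2*pi}"
    using has_integral_const_real[of "S^2" 0 "2*pi"] by blast
  have le: "norm (f N t) \<le> S^2" for N t
  proof -
    have "cmod (\<Sum>k<N. b k * cis (- (real k + 2) * t)) \<le> (\<Sum>k<N. cmod (b k * cis (- (real k + 2) * t)))"
      by (rule norm_sum)
    also have "\<dots> = (\<Sum>k<N. cmod (b k))" by (simp add: norm_mult)
    also have "\<dots> \<le> S" unfolding S_def by (rule sum_le_suminf[OF sb]) auto
    finally have "cmod (\<Sum>k<N. b k * cis (- (real k + 2) * t)) \<le> S" .
    then show ?thesis unfolding f_def by (simp add: power_mono)
  qed
  have conv: "(\<lambda>N. f N t) \<longlonglongrightarrow> g t" for t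
  proof -
    have "summable (\<lambda>k. norm (b k * cis (- (real k + 2) * t)))" using sb by (simp add: norm_mult)
    then have "summable (\<lambda>k. b k * cis (- (real k + 2) * t))" by (rule summable_norm_cancel)
    then have "(\<lambda>N. \<Sum>k<N. b k * cis (- (real k + 2) * t)) \<longlonglongrightarrow> (\<Sum>k. b k * cis (- (real k + 2) * t))"
      by (rule summable_LIMSEQ)
    then show ?thesis unfolding f_def g_def by (intro tendsto_intros)
  qed
  have lim: "(\<lambda>N. integral {0..2*pi} (f N)) \<longlonglongrightarrow> integral {0..2*pi} g"
    by (rule dominated_convergence(2)[OF _ hi le conv]) (use fi in blast)
  have "integral {0..2*pi} (f N) \<le> 2 * pi * B" for N
    using fi[of N] bound[of N] by (simp add: integral_unique)
  then have "integral {0..2*pi} g \<le> 2 * pi * B"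
    by (intro LIMSEQ_le_const2[OF lim]) auto
  then show ?thesis unfolding g_def .
qed



lemma beurling_eq_integral:
  assumes supp: "\<And>w. \<mu> w \<noteq> 0 \<Longrightarrow> cmod w < r" and r: "r < 1" and z: "cmod z = 1"
  shows "beurling \<mu> z = - (1 / of_real pi) * integral\<^sup>L lebesgue (\<lambda>w. \<mu> w / (z - w)^2)"
proof -
  have ev: "eventually (\<lambda>\<epsilon>. - (1 / of_real pi) * (LINT w : {w. \<epsilon> < dist z w} | lebesgue. \<mu> w / (z - w)\<^sup>2)
      = - (1 / of_real pi) * integral\<^sup>L lebesgue (\<lambda>w. \<mu> w / (z - w)^2)) (at_right (0::real))"
  proof (rule eventually_at_rightI[of 0 "1 - r"])
    show "0 < 1 - r" using r by simp
    fix \<epsilon> :: real assume e: "\<epsilon> \<in> {0<..<1 - r}"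
    have "(\<lambda>w. indicator {w. \<epsilon> < dist z w} w *\<^sub>R (\<mu> w / (z - w)\<^sup>2)) = (\<lambda>w. \<mu> w / (z - w)^2)"
    proof (intro ext)
      fix w
      show "indicator {w. \<epsilon> < dist z w} w *\<^sub>R (\<mu> w / (z - w)\<^sup>2) = \<mu> w / (z - w)^2"
      proof (cases "\<mu> w = 0")
        case False
        have "cmod w < r" using supp[OF False] .
        moreover have "cmod z - cmod w \<le> dist z w" by (simp add: dist_norm norm_triangle_ineq2)
        ultimately have "\<epsilon> < dist z w" using e z by auto
        then show ?thesis by simp
      qed simp
    qed
    then show "- (1 / of_real pi) * (LINT w : {w. \<epsilon> < dist z w} | lebesgue. \<mu> w / (z - w)\<^sup>2)
      = - (1 / of_real pi) * integral\<^sup>L lebesgue (\<lambda>w. \<mu> w / (z - w)^2)"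
      by (simp add: set_lebesgue_integral_def)
  qed
  show ?thesis unfolding beurling_def
    by (rule tendsto_Lim[OF _ tendsto_eventually[OF ev]]) simp
qed



locale mu_setup =
  fixes \<mu> :: "complex \<Rightarrow> complex" and r :: real
  assumes m\<mu>: "\<mu> \<in> borel_measurable lebesgue" and bnd: "\<And>w. cmod (\<mu> w) \<le> 1"
    and supp: "\<And>w. \<mu> w \<noteq> 0 \<Longrightarrow> cmod w < r" and r0: "0 < r" and r1: "r < 1"
begin

lemma inball: "\<mu> w \<noteq> 0 \<Longrightarrow> w \<in> ball 0 1"
  using supp r1 by (fastforce simp: dist_norm)

lemma int_mu_pow: "integrable lebesgue (\<lambda>w. \<mu> w * w^k)"
proof (rule integrable_ball_bnd)
  have mpow: "(\<lambda>w::complex. w^k) \<in> borel_measurable lebesgue"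
    by (rule bm_cont_leb) (intro continuous_intros)
  show "(\<lambda>w. \<mu> w * w ^ k) \<in> borel_measurable lebesgue"
    using borel_measurable_times[OF m\<mu> mpow] .
  fix w
  show "\<mu> w * w ^ k \<noteq> 0 \<Longrightarrow> w \<in> ball 0 1" using inball by auto
  show "norm (\<mu> w * w ^ k) \<le> 1"
  proof (cases "\<mu> w = 0")
    case False
    then have "cmod w \<le> 1" using inball[OF False] by (simp add: dist_norm)
    then have "cmod w ^ k \<le> 1" by (simp add: power_le_one)
    then show ?thesis using bnd[of w] by (simp add: norm_mult norm_power mult_le_one)
  qed simp
qed

lemma int_mu_norm: "integrable lebesgue (\<lambda>w. cmod (\<mu> w))"
  using int_mu_pow[of 0] by (simp add: integrable_norm)

lemma pow_bound: "cmod (\<mu> w) * cmod w ^ k \<le> r ^ k * cmod (\<mu> w)"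
proof (cases "\<mu> w = 0")
  case False
  then have "cmod w ^ k \<le> r ^ k" using supp[OF False] by (intro power_mono) auto
  then have "cmod (\<mu> w) * cmod w ^ k \<le> cmod (\<mu> w) * r ^ k" by (rule mult_left_mono) simp
  then show ?thesis by (simp add: mult.commute)
qed simp

lemma ak_bound: "cmod (integral\<^sup>L lebesgue (\<lambda>w. \<mu> w * w^k)) \<le> r ^ k * integral\<^sup>L lebesgue (\<lambda>w. cmod (\<mu> w))"
proof -
  have "cmod (integral\<^sup>L lebesgue (\<lambda>w. \<mu> w * w^k)) \<le> integral\<^sup>L lebesgue (\<lambda>w. cmod (\<mu> w * w^k))"
    by (rule integral_norm_bound)
  also have "\<dots> \<le> integral\<^sup>L lebesgue (\<lambda>w. r ^ k * cmod (\<mu> w))"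
  proof (rule integral_mono)
    show "integrable lebesgue (\<lambda>w. cmod (\<mu> w * w^k))" by (rule integrable_norm[OF int_mu_pow])
    show "integrable lebesgue (\<lambda>w. r ^ k * cmod (\<mu> w))" by (rule integrable_mult_right[OF int_mu_norm])
    show "\<And>w. w \<in> space lebesgue \<Longrightarrow> cmod (\<mu> w * w^k) \<le> r ^ k * cmod (\<mu> w)"
      using pow_bound by (simp add: norm_mult norm_power)
  qed
  also have "\<dots> = r ^ k * integral\<^sup>L lebesgue (\<lambda>w. cmod (\<mu> w))" by simp
  finally show ?thesis .
qed

lemma summable_geo_deriv: "summable (\<lambda>k. real (Suc k) * r ^ k)"
  using geometric_deriv_sums[of r] r0 r1 by (simp add: sums_iff)

lemma integral_series:
  "integral\<^sup>L lebesgue (\<lambda>w. \<mu> w / (cis t - w)^2)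
     = (\<Sum>k. (of_nat (Suc k) * cis (- (real k + 2) * t)) * integral\<^sup>L lebesgue (\<lambda>w. \<mu> w * w^k))"
proof -
  define z where "z = cis t"
  define c where "c k = of_nat (Suc k) * cis (- (real k + 2) * t)" for k
  define f where "f k w = c k * (\<mu> w * w^k)" for k w
  have nc: "cmod (c k) = real (Suc k)" for k
    unfolding c_def norm_mult norm_cis by (simp only: norm_of_nat mult_1_right)
  have z0: "z \<noteq> 0" and nz: "cmod z = 1" by (simp_all add: z_def)
  have pw: "\<mu> w / (z - w)^2 = (\<Sum>k. f k w)" for w
  proof (cases "\<mu> w = 0")
    case True then show ?thesis by (simp add: f_def)
  next
    case False
    have wr: "cmod w < 1" using supp[OF False] r1 by simp
    have x: "norm (w / z) < 1" using wr nz by (simp add: norm_divide)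
    have s1: "(\<lambda>n. \<mu> w / z^2 * (of_nat (Suc n) * (w / z)^n)) sums (\<mu> w / z^2 * (1 / (1 - w / z)^2))"
      by (rule sums_mult[OF geometric_deriv_sums[OF x]])
    have s2: "\<mu> w / z^2 * (1 / (1 - w / z)^2) = \<mu> w / (z - w)^2"
    proof -
      have "z^2 * (1 - w / z)^2 = (z - w)^2" using z0 by (simp add: power2_eq_square field_simps)
      then show ?thesis using z0 by (simp add: field_simps)
    qed
    have s3: "\<mu> w / z^2 * (of_nat (Suc n) * (w / z)^n) = f n w" for n
    proof -
      have zp: "z ^ (n + 2) = cis ((real n + 2) * t)" unfolding z_def Complex.DeMoivre by (simp add: add.commute)
      have "inverse (z ^ (n + 2)) = cis (- (real n + 2) * t)" unfolding zp cis_inverse by (rule arg_cong[where f=cis]) (simp add: algebra_simps)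
      moreover have "\<mu> w / z^2 * (of_nat (Suc n) * (w / z)^n) = of_nat (Suc n) * inverse (z ^ (n + 2)) * (\<mu> w * w^n)"
        using z0 by (simp add: field_simps power_add power_divide power2_eq_square)
      ultimately show ?thesis by (simp add: f_def c_def mult_ac)
    qed
    have "(\<lambda>n. f n w) sums (\<mu> w / (z - w)^2)" using s1 unfolding s2 s3 .
    then show ?thesis by (simp add: sums_iff)
  qed
  have intf: "integrable lebesgue (f k)" for k
    unfolding f_def by (intro integrable_mult_right int_mu_pow)
  have nf: "norm (f k w) = real (Suc k) * (cmod (\<mu> w) * cmod w ^ k)" for k w
    by (simp add: f_def nc norm_mult norm_power)
  have sumw: "summable (\<lambda>k. norm (f k w))" for w
  proof (cases "\<mu> w = 0")
    case True then show ?thesis by (simp add: f_def)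
  next
    case False
    have wr: "cmod w < 1" using supp[OF False] r1 by simp
    have "summable (\<lambda>k. real (Suc k) * cmod w ^ k)"
      using geometric_deriv_sums[of "cmod w"] wr by (simp add: sums_iff)
    then have "summable (\<lambda>k. cmod (\<mu> w) * (real (Suc k) * cmod w ^ k))" by (rule summable_mult)
    then show ?thesis by (simp add: nf mult_ac)
  qed
  define M where "M = integral\<^sup>L lebesgue (\<lambda>w. cmod (\<mu> w))"
  have sumi: "summable (\<lambda>k. integral\<^sup>L lebesgue (\<lambda>w. norm (f k w)))"
  proof (rule summable_comparison_test)
    show "summable (\<lambda>k. real (Suc k) * r ^ k * M)"
      by (rule summable_mult2[OF summable_geo_deriv])
    show "\<exists>N. \<forall>n\<ge>N. norm (integral\<^sup>L lebesgue (\<lambda>w. norm (f n w))) \<le> real (Suc n) * r ^ n * M"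
    proof (intro exI allI impI)
      fix n :: nat
      have "integral\<^sup>L lebesgue (\<lambda>w. norm (f n w)) \<le> integral\<^sup>L lebesgue (\<lambda>w. real (Suc n) * (r ^ n * cmod (\<mu> w)))"
      proof (rule integral_mono)
        show "integrable lebesgue (\<lambda>w. norm (f n w))" by (rule integrable_norm[OF intf])
        show "integrable lebesgue (\<lambda>w. real (Suc n) * (r ^ n * cmod (\<mu> w)))"
          by (intro integrable_mult_right int_mu_norm)
        show "\<And>w. w \<in> space lebesgue \<Longrightarrow> norm (f n w) \<le> real (Suc n) * (r ^ n * cmod (\<mu> w))"
          unfolding nf by (intro mult_left_mono pow_bound) auto
      qed
      also have "\<dots> = real (Suc n) * r ^ n * M" by (simp add: M_def)
      finally show "norm (integral\<^sup>L lebesgue (\<lambda>w. norm (f n w))) \<le> real (Suc n) * r ^ n * M"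
        by simp
    qed
  qed
  have "integral\<^sup>L lebesgue (\<lambda>w. \<mu> w / (cis t - w)^2) = integral\<^sup>L lebesgue (\<lambda>w. \<Sum>k. f k w)"
    using pw by (simp add: z_def)
  also have "\<dots> = (\<Sum>k. integral\<^sup>L lebesgue (f k))"
    by (rule integral_suminf[OF intf _ sumi]) (simp add: sumw)
  also have "\<dots> = (\<Sum>k. c k * integral\<^sup>L lebesgue (\<lambda>w. \<mu> w * w^k))"
  proof -
    have "integral\<^sup>L lebesgue (f k) = c k * integral\<^sup>L lebesgue (\<lambda>w. \<mu> w * w^k)" for k
      unfolding f_def by (rule integral_mult_right_zero)
    then show ?thesis by simp
  qed
  finally show ?thesis by (simp add: c_def)
qed

end



context mu_setup
begin

lemma beurling_bound:
  "1 / (2 * pi) * integral {0..2*pi} (\<lambda>t. (cmod (beurling \<mu> (cis t)))\<^sup>2) \<le> - ln (1 - r^2)"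
proof -
  define a where "a k = integral\<^sup>L lebesgue (\<lambda>w. \<mu> w * w^k)" for k
  define b where "b k = - (of_nat (Suc k) / complex_of_real pi) * a k" for k
  define M where "M = integral\<^sup>L lebesgue (\<lambda>w. cmod (\<mu> w))"
  have nb: "cmod (b k) = real (Suc k) * cmod (a k) / pi" for k
    unfolding b_def norm_mult norm_minus_cancel norm_divide norm_of_real norm_of_nat by simp
  have sb: "summable (\<lambda>k. cmod (b k))"
  proof (rule summable_comparison_test)
    show "summable (\<lambda>k. real (Suc k) * r ^ k * (M / pi))"
      by (rule summable_mult2[OF summable_geo_deriv])
    show "\<exists>N. \<forall>n\<ge>N. norm (cmod (b n)) \<le> real (Suc n) * r ^ n * (M / pi)"
    proof (intro exI allI impI)
      fix n :: nat
      have "real (Suc n) * cmod (a n) \<le> real (Suc n) * (r ^ n * M)"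
        unfolding a_def M_def by (intro mult_left_mono ak_bound) auto
      then show "norm (cmod (b n)) \<le> real (Suc n) * r ^ n * (M / pi)"
        by (simp add: nb divide_right_mono)
    qed
  qed
  have beq: "beurling \<mu> (cis t) = (\<Sum>k. b k * cis (- (real k + 2) * t))" for t
  proof -
    have s: "summable (\<lambda>k. (of_nat (Suc k) * cis (- (real k + 2) * t)) * a k)"
    proof (rule summable_norm_cancel)
      have "summable (\<lambda>k. pi * cmod (b k))" by (rule summable_mult[OF sb])
      moreover have "pi * cmod (b k) = norm ((of_nat (Suc k) * cis (- (real k + 2) * t)) * a k)" for k
        unfolding nb norm_mult norm_cis norm_of_nat by simp
      ultimately show "summable (\<lambda>k. norm ((of_nat (Suc k) * cis (- (real k + 2) * t)) * a k))" by simp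
    qed
    have "beurling \<mu> (cis t) = - (1 / of_real pi) * integral\<^sup>L lebesgue (\<lambda>w. \<mu> w / (cis t - w)^2)"
      using beurling_eq_integral[of \<mu> r "cis t"] supp r1 by simp
    also have "\<dots> = - (1 / of_real pi) * (\<Sum>k. (of_nat (Suc k) * cis (- (real k + 2) * t)) * a k)"
      unfolding integral_series a_def ..
    also have "\<dots> = (\<Sum>k. - (1 / of_real pi) * ((of_nat (Suc k) * cis (- (real k + 2) * t)) * a k))"
      by (rule suminf_mult[OF s, symmetric])
    also have "\<dots> = (\<Sum>k. b k * cis (- (real k + 2) * t))"
      by (simp add: b_def mult_ac)
    finally show ?thesis .
  qed
  have bound: "(\<Sum>k<N. (cmod (b k))^2) \<le> - ln (1 - r^2)" for N
  proof -
    have "(\<Sum>k<N. (cmod (b k))^2) = (\<Sum>k<N. (real k + 1)^2 * (cmod (a k))^2) / pi^2"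
      by (simp add: nb power_divide power_mult_distrib sum_divide_distrib add.commute)
    also have "\<dots> \<le> - (pi^2 * ln (1 - r^2)) / pi^2"
      unfolding a_def by (intro divide_right_mono bessel[OF m\<mu> bnd supp r0 r1]) auto
    also have "\<dots> = - ln (1 - r^2)" by simp
    finally show ?thesis .
  qed
  have "integral {0..2*pi} (\<lambda>t. (cmod (beurling \<mu> (cis t)))\<^sup>2)
      = integral {0..2*pi} (\<lambda>t. (cmod (\<Sum>k. b k * cis (- (real k + 2) * t)))^2)"
    by (simp only: beq)
  also have "\<dots> \<le> 2 * pi * (- ln (1 - r^2))"
    by (rule circle_parseval[OF sb bound])
  finally show ?thesis by (simp add: field_simps)
qed

end



lemma final_arith:
  fixes R \<delta> :: real
  assumes R: "1 < R" "R < 2" and d: "0 < \<delta>"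
  shows "- ln (1 - (1/R)^2) \<le> (1 + \<delta>) * ln (1 / (R - 1)) + 1"
proof -
  have e: "1 / (1 - (1/R)^2) = (1 / (R - 1)) * (R^2 / (R + 1))"
    using R by (simp add: field_simps power2_eq_square)
  have p1: "0 < 1 / (R - 1)" using R by simp
  have p2: "0 < R^2 / (R + 1)" using R by simp
  have "- ln (1 - (1/R)^2) = ln (1 / (1 - (1/R)^2))"
    using R by (subst ln_div) (auto simp: power_le_one field_simps power2_eq_square)
  also have "\<dots> = ln (1 / (R - 1)) + ln (R^2 / (R + 1))"
    unfolding e by (rule ln_mult_pos[OF p1 p2])
  also have "ln (R^2 / (R + 1)) \<le> R^2 / (R + 1) - 1" using p2 by (rule ln_le_minus_one)
  also have "R^2 / (R + 1) - 1 \<le> 1"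
  proof -
    have "R * R \<le> 2 * R" using R by (intro mult_right_mono) auto
    then have "R^2 \<le> 2 * (R + 1)" by (simp add: power2_eq_square)
    then show ?thesis using R by (simp add: field_simps)
  qed
  also have "ln (1 / (R - 1)) \<le> (1 + \<delta>) * ln (1 / (R - 1))"
  proof -
    have "1 \<le> 1 / (R - 1)" using R by (simp add: field_simps)
    then have "0 \<le> ln (1 / (R - 1))" by simp
    then show ?thesis using d by (simp add: algebra_simps)
  qed
  finally show ?thesis by simp
qed

theorem corollary4p6:
  shows "\<forall>\<delta>::real. 0 < \<delta> \<and> \<delta> < 1 \<longrightarrow>
    (\<exists>K::real. \<forall>(R::real) (\<mu>::complex \<Rightarrow> complex).
       1 < R \<and> R < 2 \<and>
       \<mu> \<in> borel_measurable lebesgue \<and>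
       (AE w in lebesgue. w \<notin> annulus (1/2) (1/R) \<longrightarrow> \<mu> w = 0) \<and>
       (AE w in lebesgue. cmod (\<mu> w) \<le> 1)
       \<longrightarrow>
       1 / (2 * pi) * integral {0..2*pi} (\<lambda>t. (cmod (beurling \<mu> (cis t)))\<^sup>2)
         \<le> (1 + \<delta>) * ln (1 / (R - 1)) + K)"
proof (intro allI impI)
  fix \<delta> :: real assume d: "0 < \<delta> \<and> \<delta> < 1"
  show "\<exists>K::real. \<forall>(R::real) (\<mu>::complex \<Rightarrow> complex).
       1 < R \<and> R < 2 \<and>
       \<mu> \<in> borel_measurable lebesgue \<and>
       (AE w in lebesgue. w \<notin> annulus (1/2) (1/R) \<longrightarrow> \<mu> w = 0) \<and>
       (AE w in lebesgue. cmod (\<mu> w) \<le> 1)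
       \<longrightarrow>
       1 / (2 * pi) * integral {0..2*pi} (\<lambda>t. (cmod (beurling \<mu> (cis t)))\<^sup>2)
         \<le> (1 + \<delta>) * ln (1 / (R - 1)) + K"
  proof (intro exI[of _ 1] allI impI)
    fix R :: real and \<mu> :: "complex \<Rightarrow> complex"
    assume H: "1 < R \<and> R < 2 \<and>
       \<mu> \<in> borel_measurable lebesgue \<and>
       (AE w in lebesgue. w \<notin> annulus (1/2) (1/R) \<longrightarrow> \<mu> w = 0) \<and>
       (AE w in lebesgue. cmod (\<mu> w) \<le> 1)"
    then have R: "1 < R" "R < 2" and m\<mu>: "\<mu> \<in> borel_measurable lebesgue"
      and ae1: "AE w in lebesgue. w \<notin> annulus (1/2) (1/R) \<longrightarrow> \<mu> w = 0"
      and ae2: "AE w in lebesgue. cmod (\<mu> w) \<le> 1" by auto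
    define r where "r = 1 / R"
    have r0: "0 < r" and r1: "r < 1" using R by (auto simp: r_def)
    define \<mu>0 where "\<mu>0 w = (if 1/2 < cmod w \<and> cmod w < r \<and> cmod (\<mu> w) \<le> 1 then \<mu> w else 0)" for w
    have mid: "(\<lambda>x::complex. x) \<in> borel_measurable lebesgue"
      by (rule bm_cont_leb) (rule continuous_on_id)
    have m\<mu>0: "\<mu>0 \<in> borel_measurable lebesgue"
      unfolding \<mu>0_def using m\<mu> mid by measurable
    have ae: "AE w in lebesgue. \<mu>0 w = \<mu> w"
      using ae1 ae2 by eventually_elim (auto simp: \<mu>0_def annulus_def r_def)
    interpret M: mu_setup \<mu>0 r
    proof
      show "\<mu>0 \<in> borel_measurable lebesgue" by (rule m\<mu>0)
      show "\<And>w. cmod (\<mu>0 w) \<le> 1" by (simp add: \<mu>0_def)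
      show "\<And>w. \<mu>0 w \<noteq> 0 \<Longrightarrow> cmod w < r" by (auto simp: \<mu>0_def split: if_splits)
    qed (use r0 r1 in auto)
    have beq: "beurling \<mu> z = beurling \<mu>0 z" for z
    proof -
      have "(LINT w : {w. \<epsilon> < dist z w} | lebesgue. \<mu> w / (z - w)\<^sup>2)
          = (LINT w : {w. \<epsilon> < dist z w} | lebesgue. \<mu>0 w / (z - w)\<^sup>2)" for \<epsilon> :: real
      proof -
        have o: "{w. \<epsilon> < dist z w} \<in> sets lebesgue"
        proof -
          have "open {w. \<epsilon> < dist z w}" by (intro open_Collect_less continuous_intros)
          then show ?thesis by simp
        qed
        have mi: "(\<lambda>w. indicator {w. \<epsilon> < dist z w} w :: real) \<in> borel_measurable lebesgue"
          by (rule borel_measurable_indicator[OF o])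
        have md: "(\<lambda>w. 1 / (z - w)^2) \<in> borel_measurable lebesgue"
          by (intro bm_leb) measurable
        show ?thesis unfolding set_lebesgue_integral_def
        proof (rule integral_cong_AE)
          show "(\<lambda>w. indicator {w. \<epsilon> < dist z w} w *\<^sub>R (\<mu> w / (z - w)\<^sup>2)) \<in> borel_measurable lebesgue"
            using borel_measurable_scaleR[OF mi borel_measurable_times[OF m\<mu> md]] by simp
          show "(\<lambda>w. indicator {w. \<epsilon> < dist z w} w *\<^sub>R (\<mu>0 w / (z - w)\<^sup>2)) \<in> borel_measurable lebesgue"
            using borel_measurable_scaleR[OF mi borel_measurable_times[OF m\<mu>0 md]] by simp
          show "AE w in lebesgue. indicator {w. \<epsilon> < dist z w} w *\<^sub>R (\<mu> w / (z - w)\<^sup>2)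
              = indicator {w. \<epsilon> < dist z w} w *\<^sub>R (\<mu>0 w / (z - w)\<^sup>2)"
            using ae by eventually_elim simp
        qed
      qed
      then show ?thesis unfolding beurling_def by simp
    qed
    have "1 / (2 * pi) * integral {0..2*pi} (\<lambda>t. (cmod (beurling \<mu> (cis t)))\<^sup>2)
        = 1 / (2 * pi) * integral {0..2*pi} (\<lambda>t. (cmod (beurling \<mu>0 (cis t)))\<^sup>2)"
      by (simp only: beq)
    also have "\<dots> \<le> - ln (1 - r^2)" by (rule M.beurling_bound)
    also have "\<dots> \<le> (1 + \<delta>) * ln (1 / (R - 1)) + 1"
      unfolding r_def using final_arith[OF R] d by simp
    finally show "1 / (2 * pi) * integral {0..2*pi} (\<lambda>t. (cmod (beurling \<mu> (cis t)))\<^sup>2)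
         \<le> (1 + \<delta>) * ln (1 / (R - 1)) + 1" .
  qed
qed


end
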